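(* Let $\alpha,\beta,\gamma$ be independent random variables, each uniformly distributed on $[0,1]$, and let $s_A,s_B,s_C:[0,1]^2\to\{0,1,2,3\}$ be measurable functions. Set $a=s_A(\beta,\gamma)$, $b=s_B(\alpha,\gamma)$, $c=s_C(\alpha,\beta)$, and let $p_{abc}$ denote the resulting joint distribution of $(a,b,c)$, with one-party marginals $p(a)$, $p(b)$, $p(c)$. Suppose $p(a=0)=p(b=0)=p(c=0)=\tfrac14$ and $p_{000}=\tfrac18$. Then there exist measurable sets $X,Y,Z\subseteq[0,1]$, each of Lebesgue measure $\tfrac12$, such that $$\{(\alpha,\beta,\gamma)\in[0,1]^3:\ s_A(\beta,\gamma)=0,\ s_B(\alpha,\gamma)=0,\ s_C(\alpha,\beta)=0\}=X\times Y\times Z$$ up to a set of Lebesgue measure zero. Equivalently, after a measure-preserving relabeling of each coordinate axis, this event is the cube $[0,\tfrac12]^3$.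
   Context: This setting is the local (classical) model of the triangle network: three independent sources emit $\alpha,\beta,\gamma$. Party A receives $(\beta,\gamma)$, party B receives $(\alpha,\gamma)$, and party C receives $(\alpha,\beta)$. Each party outputs a value in $\{0,1,2,3\}$ by a deterministic measurable response function. Under these assumptions the Finner inequality $p_{abc}\le\sqrt{p(a)p(b)p(c)}$ holds, and the hypotheses mean that it is saturated for the outputs $(0,0,0)$. *)

theory Defs
  imports "HOL-Analysis.Analysis"
begin

text \<open>Since the cube [0,1]^3 has measure 1, the uniform
  joint distribution of independent uniform alpha, beta, gamma is just the
  restriction of this measure to the cube.\<close>

definition unit_iv :: "real set" where
  "unit_iv = {0..1}"

definition M3 :: "(real \<times> real \<times> real) measure" where
  "M3 = lborel \<Otimes>\<^sub>M (lborel \<Otimes>\<^sub>M lborel)"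

definition response :: "(real \<times> real \<Rightarrow> nat) \<Rightarrow> bool" where
  "response s \<longleftrightarrow>
     s \<in> measurable (restrict_space (lborel \<Otimes>\<^sub>M lborel) (unit_iv \<times> unit_iv)) (count_space UNIV)
   \<and> (\<forall>x\<in>unit_iv \<times> unit_iv. s x \<in> {0,1,2,3})"

definition cube :: "(real \<times> real \<times> real) set" where
  "cube = unit_iv \<times> unit_iv \<times> unit_iv"

end

theory Submission imports Defs begin

abbreviation N2 :: "(real \<times> real) measure" where "N2 \<equiv> lborel \<Otimes>\<^sub>M lborel"

lemma sf_N: "sigma_finite_measure (lborel \<Otimes>\<^sub>M (lborel::real measure))"
  by (intro sigma_finite_pair_measure) (simp_all add: lborel.sigma_finite_measure_axioms)

lemma psf: "pair_sigma_finite lborel (lborel::real measure)"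
  by (simp add: pair_sigma_finite_def lborel.sigma_finite_measure_axioms)

lemma disint:
  assumes D[measurable]: "D \<in> sets M3"
  shows "emeasure M3 D = (\<integral>\<^sup>+ \<gamma>. emeasure (lborel \<Otimes>\<^sub>M lborel) {q. (fst q, snd q, \<gamma>) \<in> D} \<partial>lborel)"
proof -
  interpret N: sigma_finite_measure "lborel \<Otimes>\<^sub>M (lborel::real measure)" by (rule sf_N)
  interpret P: pair_sigma_finite lborel "lborel::real measure" ..
  have Dm[measurable]: "D \<in> sets (lborel \<Otimes>\<^sub>M (lborel \<Otimes>\<^sub>M lborel))" using D unfolding M3_def .
  have "emeasure M3 D = (\<integral>\<^sup>+ x. indicator D x \<partial>M3)" by simp
  also have "\<dots> = (\<integral>\<^sup>+ a. \<integral>\<^sup>+ p. indicator D (a,p) \<partial>(lborel \<Otimes>\<^sub>M lborel) \<partial>lborel)"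
    unfolding M3_def by (subst sigma_finite_measure.nn_integral_fst[OF sf_N, symmetric]) (auto)
  also have "\<dots> = (\<integral>\<^sup>+ a. \<integral>\<^sup>+ b. \<integral>\<^sup>+ c. indicator D (a,b,c) \<partial>lborel \<partial>lborel \<partial>lborel)"
    apply (rule nn_integral_cong)
    apply (subst lborel.nn_integral_fst[symmetric])
    by auto
  also have "\<dots> = (\<integral>\<^sup>+ a. \<integral>\<^sup>+ c. \<integral>\<^sup>+ b. indicator D (a,b,c) \<partial>lborel \<partial>lborel \<partial>lborel)"
    apply (rule nn_integral_cong)
    apply (rule pair_sigma_finite.Fubini'[OF psf, symmetric])
    by measurable
  also have "\<dots> = (\<integral>\<^sup>+ c. \<integral>\<^sup>+ a. \<integral>\<^sup>+ b. indicator D (a,b,c) \<partial>lborel \<partial>lborel \<partial>lborel)"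
    apply (rule pair_sigma_finite.Fubini'[OF psf, symmetric])
    by measurable
  also have "\<dots> = (\<integral>\<^sup>+ c. \<integral>\<^sup>+ q. indicator D (fst q, snd q, c) \<partial>(lborel \<Otimes>\<^sub>M lborel) \<partial>lborel)"
    apply (rule nn_integral_cong)
    apply (subst lborel.nn_integral_fst[symmetric])
    by auto
  also have "\<dots> = (\<integral>\<^sup>+ \<gamma>. emeasure (lborel \<Otimes>\<^sub>M lborel) {q. (fst q, snd q, \<gamma>) \<in> D} \<partial>lborel)"
  proof (intro nn_integral_cong)
    fix x :: real
    have m: "(\<lambda>q. (fst q, snd q, x)) \<in> measurable (lborel \<Otimes>\<^sub>M lborel) (lborel \<Otimes>\<^sub>M (lborel \<Otimes>\<^sub>M lborel))"
      by measurable
    have "(\<lambda>q. (fst q, snd q, x)) -` D \<inter> space (lborel \<Otimes>\<^sub>M lborel) \<in> sets (lborel \<Otimes>\<^sub>M (lborel::real measure))"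
      by (rule measurable_sets[OF m Dm])
    then have S: "{q. (fst q, snd q, x) \<in> D} \<in> sets (lborel \<Otimes>\<^sub>M (lborel::real measure))"
      by (simp add: vimage_def space_pair_measure)
    show "(\<integral>\<^sup>+ q. indicator D (fst q, snd q, x) \<partial>(lborel \<Otimes>\<^sub>M lborel)) = emeasure (lborel \<Otimes>\<^sub>M lborel) {q. (fst q, snd q, x) \<in> D}"
      by (subst nn_integral_indicator[OF S, symmetric]) (auto intro!: nn_integral_cong split: split_indicator)
  qed
  finally show ?thesis .
qed
lemma setsC:
  assumes "f \<in> measurable M N" "S \<in> sets N" "space M = UNIV"
  shows "{x. f x \<in> S} \<in> sets M"
  using measurable_sets[OF assms(1,2)] assms(3) by (simp add: vimage_def)

lemma spM3: "space M3 = UNIV" by (simp add: M3_def space_pair_measure)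
lemma t1:
  fixes S :: "(real \<times> real) set"
  assumes [measurable]: "S \<in> sets (lborel \<Otimes>\<^sub>M (lborel::real measure))"
  shows "{x::real\<times>real\<times>real. (fst (snd x), snd (snd x)) \<in> S} \<in> sets M3"
  by (rule setsC[OF _ assms spM3]) (unfold M3_def, measurable)
lemma t1b:
  shows "{x::real\<times>real\<times>real. fst x \<in> unit_iv} \<in> sets M3"
  by (rule setsC[OF _ _ spM3, where N=lborel]) (unfold M3_def unit_iv_def, measurable)+
lemma t3:
  fixes S :: "(real \<times> real) set"
  assumes [measurable]: "S \<in> sets (lborel \<Otimes>\<^sub>M (lborel::real measure))"
  shows "(\<lambda>g. measure lborel {\<beta>. (\<beta>, g) \<in> S}) \<in> borel_measurable lborel"
proof -
  have Q: "{(g,b). (b,g) \<in> S} \<in> sets (lborel \<Otimes>\<^sub>M (lborel::real measure))"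
  proof -
    have "{x. (snd x, fst x) \<in> S} \<in> sets (lborel \<Otimes>\<^sub>M (lborel::real measure))"
      by (rule setsC[OF _ assms]) (measurable, simp add: space_pair_measure)
    moreover have "{(g,b). (b,g) \<in> S} = {x. (snd x, fst x) \<in> S}" by auto
    ultimately show ?thesis by simp
  qed
  have "(\<lambda>g. emeasure lborel (Pair g -` {(g,b). (b,g) \<in> S})) \<in> borel_measurable lborel"
    by (rule lborel.measurable_emeasure_Pair[OF Q])
  then show ?thesis unfolding measure_def by (simp add: vimage_def)
qed

lemma resp_sets:
  assumes "response s"
  shows "{x \<in> unit_iv \<times> unit_iv. s x = 0} \<in> sets N2"
proof -
  have m: "s \<in> measurable (restrict_space N2 (unit_iv \<times> unit_iv)) (count_space UNIV)"
    using assms unfolding response_def by simp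
  have II: "unit_iv \<times> unit_iv \<in> sets N2" unfolding unit_iv_def by measurable
  have "s -` {0} \<inter> space (restrict_space N2 (unit_iv \<times> unit_iv)) \<in> sets (restrict_space N2 (unit_iv \<times> unit_iv))"
    by (rule measurable_sets[OF m]) simp
  then have "s -` {0} \<inter> (unit_iv \<times> unit_iv) \<in> sets N2"
    using sets_restrict_space_iff[of "unit_iv \<times> unit_iv" N2] II
    by (simp add: space_restrict_space space_pair_measure)
  moreover have "s -` {0} \<inter> (unit_iv \<times> unit_iv) = {x \<in> unit_iv \<times> unit_iv. s x = 0}" by auto
  ultimately show ?thesis by simp
qed

lemma em_I: "emeasure lborel unit_iv = 1"
  unfolding unit_iv_def by simp

lemma em_II: "emeasure N2 (unit_iv \<times> unit_iv) = 1"
proof -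
  have "unit_iv \<in> sets lborel" unfolding unit_iv_def by simp
  then show ?thesis using lborel.emeasure_pair_measure_Times[of unit_iv lborel unit_iv] em_I by simp
qed

lemma fin1: "A \<in> sets lborel \<Longrightarrow> A \<subseteq> unit_iv \<Longrightarrow> emeasure lborel A = ennreal (measure lborel A)"
proof (rule emeasure_eq_ennreal_measure)
  assume "A \<in> sets lborel" "A \<subseteq> unit_iv"
  then have "emeasure lborel A \<le> 1" using emeasure_mono[of A unit_iv lborel] em_I
    unfolding unit_iv_def by auto
  then show "emeasure lborel A \<noteq> top" using neq_top_trans[of 1] by (simp add: top_unique)
qed

lemma fin2: "A \<in> sets N2 \<Longrightarrow> A \<subseteq> unit_iv \<times> unit_iv \<Longrightarrow> emeasure N2 A = ennreal (measure N2 A)"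
proof (rule emeasure_eq_ennreal_measure)
  assume "A \<in> sets N2" "A \<subseteq> unit_iv \<times> unit_iv"
  moreover have "unit_iv \<times> unit_iv \<in> sets N2" unfolding unit_iv_def by measurable
  ultimately have "emeasure N2 A \<le> 1" using emeasure_mono[of A "unit_iv \<times> unit_iv" N2] em_II
    by auto
  then show "emeasure N2 A \<noteq> top" using neq_top_trans[of 1] by (simp add: top_unique)
qed

lemma meas_emeas: "measure M A = c \<Longrightarrow> c \<noteq> 0 \<Longrightarrow> emeasure M A = ennreal c"
  by (metis emeasure_eq_ennreal_measure measure_zero_top)

lemma int_from_nn:
  fixes f :: "'a \<Rightarrow> real"
  assumes "f \<in> borel_measurable M" "\<And>x. 0 \<le> f x" "(\<integral>\<^sup>+x. ennreal (f x) \<partial>M) = ennreal c" "0 \<le> c"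
  shows "integrable M f \<and> integral\<^sup>L M f = c"
proof
  show "integrable M f" using integrableI_nn_integral_finite[OF assms(1) _ assms(3)] assms(2) by simp
  show "integral\<^sup>L M f = c" using integral_eq_nn_integral[OF assms(1)] assms by simp
qed

lemma alg1:
  fixes a b v :: real
  assumes "0 \<le> a" "0 \<le> b" "0 \<le> v" "v \<le> b * a" "v \<le> 1/4"
  shows "v \<le> (a + b) / 4"
proof -
  have "v * v \<le> (b * a) * (1/4)" using assms by (intro mult_mono) auto
  also have "\<dots> \<le> ((a+b)/4) * ((a+b)/4)"
  proof -
    have "(a+b)*(a+b) - 4*(b*a) = (a-b)*(a-b)" by (simp add: algebra_simps)
    moreover have "0 \<le> (a-b)*(a-b)" by simp
    ultimately show ?thesis by (simp add: field_simps)
  qed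
  finally have "v^2 \<le> ((a+b)/4)^2" by (simp add: power2_eq_square)
  moreover have "0 \<le> (a+b)/4" using assms by simp
  ultimately show ?thesis by (rule power2_le_imp_le)
qed

lemma alg2:
  fixes a b v :: real
  assumes "0 \<le> a" "0 \<le> b" "v \<le> b * a" "v \<le> 1/4" "v = (a + b) / 4"
  shows "(a = 0 \<and> b = 0 \<and> v = 0) \<or> (a = 1/2 \<and> b = 1/2 \<and> v = 1/4)"
proof -
  have s: "a + b \<le> 1" using assms by simp
  have sq: "(a+b)*(a+b) - 4*(b*a) = (a-b)*(a-b)" by (simp add: algebra_simps)
  have "0 \<le> (a-b)*(a-b)" by simp
  then have "4*(b*a) \<le> (a+b)*(a+b)" using sq by linarith
  moreover have "a + b = 4 * v" using assms by simp
  moreover have "4 * v \<le> 4 * (b * a)" using assms by simp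
  ultimately have "(a+b) \<le> (a+b)*(a+b)" by linarith
  then have "(a+b) * 1 \<le> (a+b)*(a+b)" by simp
  then have "a + b = 0 \<or> 1 \<le> a + b"
  proof (cases "a + b = 0")
    case False
    then have "0 < a + b" using assms by simp
    then show ?thesis using \<open>(a+b) * 1 \<le> (a+b)*(a+b)\<close> by (simp add: mult_le_cancel_left_pos)
  qed simp
  then show ?thesis
  proof
    assume "a + b = 0" then show ?thesis using assms by simp
  next
    assume "1 \<le> a + b" then have ab: "a + b = 1" using s by simp
    then have "(a - b)*(a-b) \<le> 0" using sq assms by simp
    then have "(a - b)*(a-b) = 0" by (metis antisym zero_le_square)
    then have "a = b" by simp
    then show ?thesis using ab assms by simp
  qed
qed

lemma nullD:
  assumes "A \<subseteq> B" "A \<in> sets M" "B \<in> sets M" "emeasure M B = ennreal c" "emeasure M A = ennreal c"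
  shows "B - A \<in> null_sets M"
  using emeasure_Diff[of M A B] assms by (simp add: null_sets_def)


lemma setsM3: "f \<in> measurable M3 N \<Longrightarrow> S \<in> sets N \<Longrightarrow> {x. f x \<in> S} \<in> sets M3"
  using setsC spM3 by blast

lemma setsN2: "f \<in> measurable N2 N \<Longrightarrow> S \<in> sets N \<Longrightarrow> {x. f x \<in> S} \<in> sets N2"
  using setsC[of f N2 N S] by (simp add: space_pair_measure)

lemma mA: "(\<lambda>x. (fst (snd x), snd (snd x))) \<in> measurable M3 N2" unfolding M3_def by measurable
lemma mB: "(\<lambda>x. (fst x, snd (snd x))) \<in> measurable M3 N2" unfolding M3_def by measurable
lemma mC: "(\<lambda>x. (fst x, fst (snd x))) \<in> measurable M3 N2" unfolding M3_def by measurable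
lemma m1: "(\<lambda>x. fst x) \<in> measurable M3 lborel" unfolding M3_def by measurable
lemma m2: "(\<lambda>x. fst (snd x)) \<in> measurable M3 lborel" unfolding M3_def by measurable
lemma m3: "(\<lambda>x. snd (snd x)) \<in> measurable M3 lborel" unfolding M3_def by measurable
lemma I_m: "unit_iv \<in> sets lborel" unfolding unit_iv_def by simp

theorem lemma1:
  fixes sA sB sC :: "real \<times> real \<Rightarrow> nat"
  assumes "response sA" and "response sB" and "response sC"
    and "measure M3 {(\<alpha>,\<beta>,\<gamma>) \<in> cube. sA (\<beta>,\<gamma>) = 0} = 1/4"
    and "measure M3 {(\<alpha>,\<beta>,\<gamma>) \<in> cube. sB (\<alpha>,\<gamma>) = 0} = 1/4"
    and "measure M3 {(\<alpha>,\<beta>,\<gamma>) \<in> cube. sC (\<alpha>,\<beta>) = 0} = 1/4"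
    and "measure M3 {(\<alpha>,\<beta>,\<gamma>) \<in> cube. sA (\<beta>,\<gamma>) = 0 \<and> sB (\<alpha>,\<gamma>) = 0 \<and> sC (\<alpha>,\<beta>) = 0} = 1/8"
  shows "\<exists>X Y Z. X \<in> sets lborel \<and> Y \<in> sets lborel \<and> Z \<in> sets lborel
          \<and> X \<subseteq> unit_iv \<and> Y \<subseteq> unit_iv \<and> Z \<subseteq> unit_iv
          \<and> measure lborel X = 1/2 \<and> measure lborel Y = 1/2 \<and> measure lborel Z = 1/2
          \<and> (let E = {(\<alpha>,\<beta>,\<gamma>) \<in> cube. sA (\<beta>,\<gamma>) = 0 \<and> sB (\<alpha>,\<gamma>) = 0 \<and> sC (\<alpha>,\<beta>) = 0}
             in emeasure M3 ((E - X \<times> Y \<times> Z) \<union> (X \<times> Y \<times> Z - E)) = 0)"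
proof -
  define SA where "SA = {x \<in> unit_iv \<times> unit_iv. sA x = 0}"
  define SB where "SB = {x \<in> unit_iv \<times> unit_iv. sB x = 0}"
  define SC where "SC = {x \<in> unit_iv \<times> unit_iv. sC x = 0}"
  have SA_m[measurable]: "SA \<in> sets N2" using resp_sets[OF assms(1)] unfolding SA_def .
  have SB_m[measurable]: "SB \<in> sets N2" using resp_sets[OF assms(2)] unfolding SB_def .
  have SC_m[measurable]: "SC \<in> sets N2" using resp_sets[OF assms(3)] unfolding SC_def .
  have SA_I: "SA \<subseteq> unit_iv \<times> unit_iv" unfolding SA_def by auto
  have SB_I: "SB \<subseteq> unit_iv \<times> unit_iv" unfolding SB_def by auto
  have SC_I: "SC \<subseteq> unit_iv \<times> unit_iv" unfolding SC_def by auto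
  define As where "As g = {y. (y,g) \<in> SA}" for g
  define Bs where "Bs g = {x. (x,g) \<in> SB}" for g
  define V where "V g = {q. (snd q, g) \<in> SA \<and> (fst q, g) \<in> SB \<and> q \<in> SC}" for g
  define a where "a g = measure lborel (As g)" for g
  define b where "b g = measure lborel (Bs g)" for g
  define v where "v g = measure N2 (V g)" for g
  define cC where "cC = measure N2 SC"
  have As_m: "As g \<in> sets lborel" for g unfolding As_def by measurable
  have Bs_m: "Bs g \<in> sets lborel" for g unfolding Bs_def by measurable
  have As_I: "As g \<subseteq> unit_iv" for g using SA_I unfolding As_def by auto
  have Bs_I: "Bs g \<subseteq> unit_iv" for g using SB_I unfolding Bs_def by auto
  have V_m: "V g \<in> sets N2" for g
  proof -
    have "{q. (snd q, g) \<in> SA} \<in> sets N2" by (rule setsN2[OF _ SA_m]) measurable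
    moreover have "{q. (fst q, g) \<in> SB} \<in> sets N2" by (rule setsN2[OF _ SB_m]) measurable
    ultimately have "{q. (snd q, g) \<in> SA} \<inter> {q. (fst q, g) \<in> SB} \<inter> SC \<in> sets N2" using SC_m by auto
    moreover have "V g = {q. (snd q, g) \<in> SA} \<inter> {q. (fst q, g) \<in> SB} \<inter> SC" unfolding V_def by auto
    ultimately show ?thesis by simp
  qed
  have V_BA: "V g \<subseteq> Bs g \<times> As g" for g unfolding V_def As_def Bs_def by auto
  have V_C: "V g \<subseteq> SC" for g unfolding V_def by auto
  have BA_m: "Bs g \<times> As g \<in> sets N2" for g using As_m Bs_m by (intro pair_measureI)
  have eA: "emeasure lborel (As g) = ennreal (a g)" for g using fin1[OF As_m As_I] a_def by simp
  have eB: "emeasure lborel (Bs g) = ennreal (b g)" for g using fin1[OF Bs_m Bs_I] b_def by simp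
  have eV: "emeasure N2 (V g) = ennreal (v g)" for g
  proof -
    have "V g \<subseteq> unit_iv \<times> unit_iv" using V_C SC_I by blast
    then show ?thesis using fin2[OF V_m] v_def by simp
  qed
  have eC: "emeasure N2 SC = ennreal cC" using fin2[OF SC_m SC_I] cC_def by simp
  have a_nn: "0 \<le> a g" for g unfolding a_def by simp
  have b_nn: "0 \<le> b g" for g unfolding b_def by simp
  have v_nn: "0 \<le> v g" for g unfolding v_def by simp
  have eBA: "emeasure N2 (Bs g \<times> As g) = ennreal (b g * a g)" for g
    using lborel.emeasure_pair_measure_Times[OF Bs_m As_m] eA eB a_nn b_nn by (simp add: ennreal_mult)
  have v_ba: "v g \<le> b g * a g" for g
  proof -
    have "ennreal (v g) \<le> ennreal (b g * a g)" using emeasure_mono[OF V_BA BA_m] eV eBA by simp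
    then show ?thesis using a_nn b_nn by (simp add: ennreal_le_iff)
  qed
  have v_c: "v g \<le> cC" for g
  proof -
    have "ennreal (v g) \<le> ennreal cC" using emeasure_mono[OF V_C SC_m] eV eC by simp
    then show ?thesis using cC_def by (simp add: ennreal_le_iff)
  qed
  have a_m[measurable]: "a \<in> borel_measurable lborel"
    unfolding a_def As_def by (rule t3[OF SA_m])
  have b_m[measurable]: "b \<in> borel_measurable lborel"
    unfolding b_def Bs_def by (rule t3[OF SB_m])
  have v_m[measurable]: "v \<in> borel_measurable lborel"
  proof -
    define Q where "Q = {x::real \<times> real \<times> real. (snd (snd x), fst x) \<in> SA \<and> (fst (snd x), fst x) \<in> SB \<and> snd x \<in> SC}"
    have Q_m: "Q \<in> sets (lborel \<Otimes>\<^sub>M N2)"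
    proof -
      have sp: "space (lborel \<Otimes>\<^sub>M N2) = UNIV" by (simp add: space_pair_measure)
      have "{x::real \<times> real \<times> real. (snd (snd x), fst x) \<in> SA} \<in> sets (lborel \<Otimes>\<^sub>M N2)"
        by (rule setsC[OF _ SA_m sp]) measurable
      moreover have "{x::real \<times> real \<times> real. (fst (snd x), fst x) \<in> SB} \<in> sets (lborel \<Otimes>\<^sub>M N2)"
        by (rule setsC[OF _ SB_m sp]) measurable
      moreover have "{x::real \<times> real \<times> real. snd x \<in> SC} \<in> sets (lborel \<Otimes>\<^sub>M N2)"
        by (rule setsC[OF _ SC_m sp]) measurable
      ultimately show ?thesis unfolding Q_def by (simp add: Collect_conj_eq Int_assoc sets.Int)
    qed
    have "(\<lambda>g. emeasure N2 (Pair g -` Q)) \<in> borel_measurable lborel"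
      by (rule sigma_finite_measure.measurable_emeasure_Pair[OF sf_N Q_m])
    moreover have "Pair g -` Q = V g" for g unfolding Q_def V_def by auto
    ultimately show ?thesis unfolding v_def measure_def by simp
  qed
  have A_eq: "{(\<alpha>,\<beta>,\<gamma>) \<in> cube. sA (\<beta>,\<gamma>) = 0} = {x. (fst (snd x), snd (snd x)) \<in> SA} \<inter> {x. fst x \<in> unit_iv}"
    unfolding cube_def SA_def by auto
  have B_eq: "{(\<alpha>,\<beta>,\<gamma>) \<in> cube. sB (\<alpha>,\<gamma>) = 0} = {x. (fst x, snd (snd x)) \<in> SB} \<inter> {x. fst (snd x) \<in> unit_iv}"
    unfolding cube_def SB_def by auto
  have C_eq: "{(\<alpha>,\<beta>,\<gamma>) \<in> cube. sC (\<alpha>,\<beta>) = 0} = {x. (fst x, fst (snd x)) \<in> SC} \<inter> {x. snd (snd x) \<in> unit_iv}"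
    unfolding cube_def SC_def by auto
  define E where "E = {(\<alpha>,\<beta>,\<gamma>) \<in> cube. sA (\<beta>,\<gamma>) = 0 \<and> sB (\<alpha>,\<gamma>) = 0 \<and> sC (\<alpha>,\<beta>) = 0}"
  have E_eq: "E = {x. (fst (snd x), snd (snd x)) \<in> SA} \<inter> {x. (fst x, snd (snd x)) \<in> SB} \<inter> {x. (fst x, fst (snd x)) \<in> SC}"
    unfolding E_def cube_def SA_def SB_def SC_def by auto
  have A_m: "{x. (fst (snd x), snd (snd x)) \<in> SA} \<inter> {x. fst x \<in> unit_iv} \<in> sets M3"
    using setsM3[OF mA SA_m] setsM3[OF m1 I_m] by auto
  have B_m: "{x. (fst x, snd (snd x)) \<in> SB} \<inter> {x. fst (snd x) \<in> unit_iv} \<in> sets M3"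
    using setsM3[OF mB SB_m] setsM3[OF m2 I_m] by auto
  have C_m: "{x. (fst x, fst (snd x)) \<in> SC} \<inter> {x. snd (snd x) \<in> unit_iv} \<in> sets M3"
    using setsM3[OF mC SC_m] setsM3[OF m3 I_m] by auto
  have E_m: "E \<in> sets M3"
    unfolding E_eq using setsM3[OF mA SA_m] setsM3[OF mB SB_m] setsM3[OF mC SC_m] by auto
  have hA: "(\<integral>\<^sup>+g. ennreal (a g) \<partial>lborel) = ennreal (1/4)"
  proof -
    have "ennreal (1/4) = emeasure M3 ({x. (fst (snd x), snd (snd x)) \<in> SA} \<inter> {x. fst x \<in> unit_iv})"
      using meas_emeas[OF assms(4)] A_eq by simp
    also have "\<dots> = (\<integral>\<^sup>+g. emeasure N2 (unit_iv \<times> As g) \<partial>lborel)"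
      by (subst disint[OF A_m]) (auto simp: As_def intro!: nn_integral_cong arg_cong[where f="emeasure N2"])
    also have "\<dots> = (\<integral>\<^sup>+g. ennreal (a g) \<partial>lborel)"
      by (intro nn_integral_cong) (simp add: lborel.emeasure_pair_measure_Times[OF I_m As_m] em_I eA)
    finally show ?thesis by simp
  qed
  have hB: "(\<integral>\<^sup>+g. ennreal (b g) \<partial>lborel) = ennreal (1/4)"
  proof -
    have "ennreal (1/4) = emeasure M3 ({x. (fst x, snd (snd x)) \<in> SB} \<inter> {x. fst (snd x) \<in> unit_iv})"
      using meas_emeas[OF assms(5)] B_eq by simp
    also have "\<dots> = (\<integral>\<^sup>+g. emeasure N2 (Bs g \<times> unit_iv) \<partial>lborel)"
      by (subst disint[OF B_m]) (auto simp: Bs_def intro!: nn_integral_cong arg_cong[where f="emeasure N2"])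
    also have "\<dots> = (\<integral>\<^sup>+g. ennreal (b g) \<partial>lborel)"
      by (intro nn_integral_cong) (simp add: lborel.emeasure_pair_measure_Times[OF Bs_m I_m] em_I eB)
    finally show ?thesis by simp
  qed
  have hV: "(\<integral>\<^sup>+g. ennreal (v g) \<partial>lborel) = ennreal (1/8)"
  proof -
    have "ennreal (1/8) = emeasure M3 E"
      using meas_emeas[OF assms(7)] E_def by simp
    also have "\<dots> = (\<integral>\<^sup>+g. emeasure N2 (V g) \<partial>lborel)"
      by (subst disint[OF E_m]) (auto simp: V_def E_eq intro!: nn_integral_cong arg_cong[where f="emeasure N2"])
    also have "\<dots> = (\<integral>\<^sup>+g. ennreal (v g) \<partial>lborel)"
      by (intro nn_integral_cong) (simp add: eV)
    finally show ?thesis by simp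
  qed
  have hC: "cC = 1/4"
  proof -
    have "ennreal (1/4) = emeasure M3 ({x. (fst x, fst (snd x)) \<in> SC} \<inter> {x. snd (snd x) \<in> unit_iv})"
      using meas_emeas[OF assms(6)] C_eq by simp
    also have "\<dots> = (\<integral>\<^sup>+g. ennreal cC * indicator unit_iv g \<partial>lborel)"
      by (subst disint[OF C_m]) (auto simp: eC intro!: nn_integral_cong split: split_indicator)
    also have "\<dots> = ennreal cC"
      by (simp add: nn_integral_cmult_indicator[OF I_m] em_I)
    finally show ?thesis using cC_def by (simp add: ennreal_inj)
  qed
  have iA: "integrable lborel a \<and> integral\<^sup>L lborel a = 1/4" by (rule int_from_nn[OF a_m a_nn hA]) simp
  have iB: "integrable lborel b \<and> integral\<^sup>L lborel b = 1/4" by (rule int_from_nn[OF b_m b_nn hB]) simp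
  have iV: "integrable lborel v \<and> integral\<^sup>L lborel v = 1/8" by (rule int_from_nn[OF v_m v_nn hV]) simp
  define w where "w g = (a g + b g) / 4 - v g" for g
  have w_nn: "0 \<le> w g" for g
    using alg1[OF a_nn b_nn v_nn v_ba, of g] v_c[of g] hC unfolding w_def by simp
  have w_int: "integrable lborel w" unfolding w_def using iA iB iV by auto
  have "integral\<^sup>L lborel w = 0" unfolding w_def using iA iB iV by simp
  then have AEw: "AE g in lborel. w g = 0"
    using integral_nonneg_eq_0_iff_AE[OF w_int] w_nn by simp
  have AEgood: "AE g in lborel. (a g = 0 \<and> b g = 0 \<and> v g = 0) \<or> (a g = 1/2 \<and> b g = 1/2 \<and> v g = 1/4)"
  proof (rule AE_mp[OF AEw], intro AE_I2 impI)
    fix g assume "w g = 0"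
    then have "v g = (a g + b g) / 4" unfolding w_def by simp
    then show "(a g = 0 \<and> b g = 0 \<and> v g = 0) \<or> (a g = 1/2 \<and> b g = 1/2 \<and> v g = 1/4)"
      using alg2[OF a_nn b_nn v_ba, of g] v_c[of g] hC by simp
  qed
  define Z where "Z = {g. a g = 1/2 \<and> b g = 1/2 \<and> v g = 1/4}"
  have Z_m: "Z \<in> sets lborel" unfolding Z_def by measurable
  have Z_I: "Z \<subseteq> unit_iv"
  proof
    fix g assume "g \<in> Z"
    show "g \<in> unit_iv"
    proof (rule ccontr)
      assume "g \<notin> unit_iv"
      then have "As g = {}" using SA_I unfolding As_def by auto
      then have "a g = 0" unfolding a_def by simp
      then show False using \<open>g \<in> Z\<close> unfolding Z_def by simp
    qed
  qed
  have AEa: "AE g in lborel. a g = 1/2 * indicator Z g"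
    using AEgood by eventually_elim (auto simp: Z_def)
  have "integral\<^sup>L lborel a = integral\<^sup>L lborel (\<lambda>g. 1/2 * indicator Z g)"
    by (rule integral_cong_AE) (use AEa Z_m in auto)
  also have "\<dots> = 1/2 * measure lborel Z" by simp
  finally have mZ: "measure lborel Z = 1/2" using iA by simp
  then have "Z \<noteq> {}" by auto
  then obtain g0 where g0: "g0 \<in> Z" by auto
  define X where "X = Bs g0"
  define Y where "Y = As g0"
  have XY_m: "X \<times> Y \<in> sets N2" unfolding X_def Y_def by (rule BA_m)
  have null1: "SC - V g \<in> null_sets N2" if "g \<in> Z" for g
    using nullD[of "V g" SC N2 cC] V_C V_m SC_m eC eV that hC by (auto simp: Z_def)
  have null2: "Bs g \<times> As g - V g \<in> null_sets N2" if "g \<in> Z" for g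
  proof -
    have ab: "b g = 1/2" "a g = 1/2" "v g = 1/4" using that by (auto simp: Z_def)
    have "b g * a g = 1/4" by (subst ab(1), subst ab(2)) simp
    then show ?thesis using nullD[of "V g" "Bs g \<times> As g" N2 "1/4"] V_BA V_m BA_m eBA eV ab(3) by auto
  qed
  have null3: "X \<times> Y - SC \<in> null_sets N2"
    by (rule null_sets_subset[OF null2[OF g0]]) (use XY_m SC_m V_C in \<open>auto simp: X_def Y_def\<close>)
  have null4: "SC - X \<times> Y \<in> null_sets N2"
    by (rule null_sets_subset[OF null1[OF g0]]) (use XY_m SC_m V_BA in \<open>auto simp: X_def Y_def\<close>)
  have nullZ: "(V g - X \<times> Y) \<union> (X \<times> Y - V g) \<in> null_sets N2" if "g \<in> Z" for g
  proof (rule null_sets_subset)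
    show "(SC - X \<times> Y) \<union> (X \<times> Y - SC) \<union> (SC - V g) \<in> null_sets N2"
      using null1[OF that] null3 null4 by auto
    show "(V g - X \<times> Y) \<union> (X \<times> Y - V g) \<in> sets N2" using V_m XY_m by auto
    show "(V g - X \<times> Y) \<union> (X \<times> Y - V g) \<subseteq> (SC - X \<times> Y) \<union> (X \<times> Y - SC) \<union> (SC - V g)"
      using V_C by auto
  qed
  have null0: "V g \<in> null_sets N2" if "a g = 0" for g
  proof (rule null_sets_subset)
    show "Bs g \<times> As g \<in> null_sets N2" using eBA[of g] that BA_m by (simp add: null_sets_def)
  qed (use V_m V_BA in auto)
  define D where "D = (E - X \<times> Y \<times> Z) \<union> (X \<times> Y \<times> Z - E)"
  have XYZ_m: "X \<times> Y \<times> Z \<in> sets M3"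
    unfolding M3_def X_def Y_def using Bs_m As_m Z_m by (intro pair_measureI)
  have D_m: "D \<in> sets M3" unfolding D_def using E_m XYZ_m by auto
  have slice: "{q. (fst q, snd q, g) \<in> D} =
      (V g - (if g \<in> Z then X \<times> Y else {})) \<union> ((if g \<in> Z then X \<times> Y else {}) - V g)" for g
    unfolding D_def E_eq V_def by auto
  have AE0: "AE g in lborel. emeasure N2 {q. (fst q, snd q, g) \<in> D} = 0"
    using AEgood
    proof eventually_elim
    case (elim g)
    show ?case
    proof (cases "g \<in> Z")
      case True
      then show ?thesis using nullZ[OF True] slice[of g] by (simp add: null_sets_def)
    next
      case False
      then have "a g = 0" using elim unfolding Z_def by auto
      then show ?thesis using null0[of g] False slice[of g] by (simp add: null_sets_def)
    qed
    qed
  have D0: "emeasure M3 D = 0"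
    using disint[OF D_m] nn_integral_cong_AE[OF AE0] by simp
  show ?thesis
  proof (intro exI conjI)
    show "X \<in> sets lborel" "Y \<in> sets lborel" "Z \<in> sets lborel"
      unfolding X_def Y_def using Bs_m As_m Z_m by auto
    show "X \<subseteq> unit_iv" "Y \<subseteq> unit_iv" "Z \<subseteq> unit_iv"
      unfolding X_def Y_def using Bs_I As_I Z_I by auto
    show "measure lborel X = 1/2" "measure lborel Y = 1/2" "measure lborel Z = 1/2"
      using g0 mZ unfolding X_def Y_def Z_def a_def b_def by auto
    show "let E = {(\<alpha>,\<beta>,\<gamma>) \<in> cube. sA (\<beta>,\<gamma>) = 0 \<and> sB (\<alpha>,\<gamma>) = 0 \<and> sC (\<alpha>,\<beta>) = 0}
             in emeasure M3 ((E - X \<times> Y \<times> Z) \<union> (X \<times> Y \<times> Z - E)) = 0"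
      using D0 unfolding Let_def D_def E_def .
  qed
qed
end
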